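(* Let $q\in\mathbb{C}^\times$ be not a root of unity and $Q\in\mathbb{C}^\times$. (i) For $\varphi,\varphi'\in\mathbb{C}[x]\setminus\{0\}$ with $\deg\varphi\ge\deg\varphi'$, one has $\mathbf{u}^{\langle Q\rangle}(\varphi)=\mathbf{u}^{\langle Q\rangle}(\varphi')$ if and only if $$\varphi=q^{-(\deg\varphi-\deg\varphi')}\,\varphi'\prod_{z=1}^{\deg\varphi-\deg\varphi'}\big(x-q^{-2(z-1)}\beta_\varphi^{-2}Q^{-1}\big).$$ (ii) The restriction of $\mathbf{u}^{\langle Q\rangle}$ to $\mathbb{C}[x]^{\langle Q\rangle}$ is injective, and for every nonzero $\varphi\in\mathbb{C}[x]$ there exists a unique $\varphi'\in\mathbb{C}[x]^{\langle Q\rangle}$ with $\mathbf{u}^{\langle Q\rangle}(\varphi)=\mathbf{u}^{\langle Q\rangle}(\varphi')$.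
   Context: For $t,k>0$, $p_t(q)(x_1,\dots,x_k)=\sum_{\lambda\vdash t,\ \ell(\lambda)\le k}q^{-\ell(\lambda)}(q-q^{-1})^{\ell(\lambda)-1}m_\lambda(x_1,\dots,x_k)$, where $m_\lambda$ is the monomial symmetric polynomial and $\ell(\lambda)$ the number of nonzero parts. For $\beta\in\mathbb{C}^\times$ put $\tilde\beta=(q-q^{-1})^{-1}(1-\beta^{-2})$ and $p^{\langle Q\rangle}_t(q;\beta)(x_1,\dots,x_k)=p_t(q)(x_1,\dots,x_k)+\tilde\beta Q^{-t}+(q-q^{-1})\sum_{z=1}^{t-1}\tilde\beta Q^{-t+z}p_z(q)(x_1,\dots,x_k)$. For nonzero $\varphi=\beta_\varphi(x-\gamma_1)\cdots(x-\gamma_k)\in\mathbb{C}[x]$ ($\beta_\varphi$ the leading coefficient), with $\tilde\beta_\varphi=(q-q^{-1})^{-1}(1-\beta_\varphi^{-2})$, define $\mathbf{u}^{\langle Q\rangle}(\varphi)\in\mathbb{C}^\times\times\prod_{t>0}\mathbb{C}$ to be $(\beta_\varphi,(\tilde\beta_\varphi Q^{-t})_{t>0})$ if $\deg\varphi=0$ and $(\beta_\varphi q^{\deg\varphi},(p^{\langle Q\rangle}_t(q;\beta_\varphi)(\gamma_1,\dots,\gamma_k))_{t>0})$ if $\deg\varphi>0$. Let $\mathbb{C}[x]^{\langle Q\rangle}=\{\varphi\in\mathbb{C}[x]\setminus\{0\}:\beta_\varphi^{-2}Q^{-1}\text{ is not a root of }\varphi\}$. *)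

theory Defs
  imports "HOL-Computational_Algebra.Computational_Algebra" "HOL-Library.Multiset"
begin

(* Partitions of t: multisets of positive naturals summing to t; length = size *)
definition partitions :: "nat \<Rightarrow> nat multiset set" where
  "partitions t = {lam. (\<forall>a\<in>#lam. 0 < a) \<and> sum_mset lam = t}"

(* monomial symmetric polynomial m_lam evaluated at (x_1,...,x_k) = xs:
   sum of x^alpha over all exponent vectors alpha in N^k whose nonzero entries,
   as a multiset, form lam *)
definition monomial_sym :: "nat multiset \<Rightarrow> complex list \<Rightarrow> complex" where
  "monomial_sym lam xs =
     (\<Sum>\<alpha>\<in>{\<alpha> :: nat \<Rightarrow> nat. (\<forall>i. length xs \<le> i \<longrightarrow> \<alpha> i = 0) \<and> (\<forall>i. \<alpha> i \<le> sum_mset lam)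
                  \<and> mset (filter (\<lambda>a. 0 < a) (map \<alpha> [0..<length xs])) = lam}.
        \<Prod>i<length xs. (xs ! i) ^ \<alpha> i)"

definition p_fun :: "complex \<Rightarrow> nat \<Rightarrow> complex list \<Rightarrow> complex" where
  "p_fun q t xs =
     (\<Sum>lam\<in>{lam\<in>partitions t. size lam \<le> length xs}.
        q powi (- int (size lam)) * (q - inverse q) ^ (size lam - 1) * monomial_sym lam xs)"

definition beta_tilde :: "complex \<Rightarrow> complex \<Rightarrow> complex" where
  "beta_tilde q \<beta> = inverse (q - inverse q) * (1 - \<beta> powi (-2))"

definition pQ_fun :: "complex \<Rightarrow> complex \<Rightarrow> complex \<Rightarrow> nat \<Rightarrow> complex list \<Rightarrow> complex" where
  "pQ_fun q Q \<beta> t xs = p_fun q t xs + beta_tilde q \<beta> * Q powi (- int t)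
     + (q - inverse q) * (\<Sum>z=1..t-1. beta_tilde q \<beta> * Q powi (- int t + int z) * p_fun q z xs)"

(* a list of the roots gamma_1,...,gamma_k of phi, with multiplicity (order irrelevant) *)
definition root_list :: "complex poly \<Rightarrow> complex list" where
  "root_list \<phi> = (SOME xs. mset xs = proots \<phi>)"

(* u^<Q>(phi); the sequence component is indexed by t > 0 (value at t = 0 fixed to 0) *)
definition uQ :: "complex \<Rightarrow> complex \<Rightarrow> complex poly \<Rightarrow> complex \<times> (nat \<Rightarrow> complex)" where
  "uQ q Q \<phi> =
     (if degree \<phi> = 0
      then (lead_coeff \<phi>, \<lambda>t. if t = 0 then 0 else beta_tilde q (lead_coeff \<phi>) * Q powi (- int t))
      else (lead_coeff \<phi> * q ^ degree \<phi>,
            \<lambda>t. if t = 0 then 0 else pQ_fun q Q (lead_coeff \<phi>) t (root_list \<phi>)))"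

definition polysQ :: "complex \<Rightarrow> complex poly set" where
  "polysQ Q = {\<phi>. \<phi> \<noteq> 0 \<and> poly \<phi> ((lead_coeff \<phi>) powi (-2) * inverse Q) \<noteq> 0}"

end

theory Submission
  imports Defs
begin


definition Aset :: "nat \<Rightarrow> nat \<Rightarrow> (nat \<Rightarrow> nat) set" where
  "Aset k t = {\<alpha>. (\<forall>i. k \<le> i \<longrightarrow> \<alpha> i = 0) \<and> (\<Sum>i<k. \<alpha> i) = t}"

definition consf :: "nat \<Rightarrow> (nat \<Rightarrow> nat) \<Rightarrow> nat \<Rightarrow> nat" where
  "consf a \<beta> i = (case i of 0 \<Rightarrow> a | Suc j \<Rightarrow> \<beta> j)"

lemma Aset_bij:
  "bij_betw (\<lambda>\<alpha>. (\<alpha> 0, \<alpha> \<circ> Suc)) (Aset (Suc k) t) (SIGMA a:{..t}. Aset k (t - a))"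
proof (rule bij_betwI[where g = "\<lambda>(a, \<beta>). consf a \<beta>"])
  show "(\<lambda>\<alpha>. (\<alpha> 0, \<alpha> \<circ> Suc)) \<in> Aset (Suc k) t \<rightarrow> (SIGMA a:{..t}. Aset k (t - a))"
    by (auto simp del: sum.lessThan_Suc simp: Aset_def sum.lessThan_Suc_shift)
  show "(\<lambda>(a, \<beta>). consf a \<beta>) \<in> (SIGMA a:{..t}. Aset k (t - a)) \<rightarrow> Aset (Suc k) t"
    by (auto simp del: sum.lessThan_Suc simp: Aset_def sum.lessThan_Suc_shift consf_def split: nat.splits)
  show "(case (\<alpha> 0, \<alpha> \<circ> Suc) of (a, \<beta>) \<Rightarrow> consf a \<beta>) = \<alpha>" for \<alpha>
    by (auto simp: consf_def fun_eq_iff split: nat.splits)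
  show "(\<lambda>\<alpha>. (\<alpha> 0, \<alpha> \<circ> Suc)) (case y of (a, \<beta>) \<Rightarrow> consf a \<beta>) = y" for y
    by (cases y) (auto simp: consf_def fun_eq_iff)
qed

lemma Aset_0: "Aset 0 t = (if t = 0 then {\<lambda>_. 0} else {})"
  by (auto simp: Aset_def)

lemma finite_Aset: "finite (Aset k t)"
proof (induction k arbitrary: t)
  case 0 then show ?case by (simp add: Aset_0)
next
  case (Suc k)
  have "finite (SIGMA a:{..t}. Aset k (t - a))" using Suc by auto
  then show ?case using Aset_bij bij_betw_finite by blast
qed

lemma sum_Aset_Suc:
  "(\<Sum>\<alpha>\<in>Aset (Suc k) t. F \<alpha>) = (\<Sum>a\<le>t. \<Sum>\<beta>\<in>Aset k (t - a). F (consf a \<beta>))"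
proof -
  have "(\<Sum>\<alpha>\<in>Aset (Suc k) t. F \<alpha>) = (\<Sum>p\<in>(SIGMA a:{..t}. Aset k (t - a)). F (consf (fst p) (snd p)))"
  proof -
    have e: "consf (\<alpha> 0) (\<alpha> \<circ> Suc) = \<alpha>" for \<alpha>
      by (simp add: consf_def fun_eq_iff split: nat.splits)
    have "(\<Sum>p\<in>(SIGMA a:{..t}. Aset k (t - a)). F (consf (fst p) (snd p)))
          = (\<Sum>\<alpha>\<in>Aset (Suc k) t. F (consf (\<alpha> 0) (\<alpha> \<circ> Suc)))"
      using sum.reindex_bij_betw[OF Aset_bij, of "\<lambda>p. F (consf (fst p) (snd p))"] by simp
    then show ?thesis by (simp add: e)
  qed
  also have "\<dots> = (\<Sum>a\<le>t. \<Sum>\<beta>\<in>Aset k (t - a). F (consf a \<beta>))"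
    by (subst sum.Sigma) (auto simp: finite_Aset split_def)
  finally show ?thesis .
qed

definition gw :: "complex \<Rightarrow> nat \<Rightarrow> complex \<Rightarrow> complex" where
  "gw q a x = (if a = 0 then 1 else inverse q * (q - inverse q)) * x ^ a"

definition cc :: "complex \<Rightarrow> nat \<Rightarrow> complex list \<Rightarrow> complex" where
  "cc q t xs = (\<Sum>\<alpha>\<in>Aset (length xs) t. \<Prod>i<length xs. gw q (\<alpha> i) (xs ! i))"

lemma cc_Nil: "cc q t [] = (if t = 0 then 1 else 0)"
  by (simp add: cc_def Aset_0)

lemma cc_Cons: "cc q t (x # xs) = (\<Sum>a\<le>t. gw q a x * cc q (t - a) xs)"
  unfolding cc_def length_Cons
  by (simp del: prod.lessThan_Suc add: sum_Aset_Suc prod.lessThan_Suc_shift consf_def sum_distrib_left)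



lemma sum_list_filter_pos: "sum_list (filter (\<lambda>a::nat. 0 < a) xs) = sum_list xs"
  by (induction xs) auto

definition Gm :: "nat \<Rightarrow> (nat \<Rightarrow> nat) \<Rightarrow> nat multiset" where
  "Gm k \<alpha> = mset (filter (\<lambda>a. 0 < a) (map \<alpha> [0..<k]))"

lemma sum_Gm: "sum_mset (Gm k \<alpha>) = (\<Sum>i<k. \<alpha> i)"
proof -
  have "sum_mset (Gm k \<alpha>) = sum_list (map \<alpha> [0..<k])"
    unfolding Gm_def sum_mset_sum_list sum_list_filter_pos ..
  also have "\<dots> = sum \<alpha> (set [0..<k])" using sum_set_upt_conv_sum_list_nat[of \<alpha> 0 k] by simp
  finally show ?thesis by (simp add: atLeast0LessThan)
qed

lemma size_Gm: "size (Gm k \<alpha>) = card {i. i < k \<and> 0 < \<alpha> i}"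
  unfolding Gm_def size_mset length_filter_conv_card by (intro arg_cong[where f=card] Collect_cong) auto

lemma mono_set_eq:
  assumes "lam \<in> partitions t"
  shows "{\<alpha> :: nat \<Rightarrow> nat. (\<forall>i. k \<le> i \<longrightarrow> \<alpha> i = 0) \<and> (\<forall>i. \<alpha> i \<le> sum_mset lam)
                  \<and> mset (filter (\<lambda>a. 0 < a) (map \<alpha> [0..<k])) = lam}
         = {\<alpha> \<in> Aset k t. Gm k \<alpha> = lam}"
proof -
  have st: "sum_mset lam = t" using assms by (simp add: partitions_def)
  show ?thesis
  proof (intro equalityI subsetI)
    fix \<alpha> assume "\<alpha> \<in> {\<alpha> :: nat \<Rightarrow> nat. (\<forall>i. k \<le> i \<longrightarrow> \<alpha> i = 0) \<and> (\<forall>i. \<alpha> i \<le> sum_mset lam)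
                  \<and> mset (filter (\<lambda>a. 0 < a) (map \<alpha> [0..<k])) = lam}"
    then have a: "\<forall>i. k \<le> i \<longrightarrow> \<alpha> i = 0" and g: "Gm k \<alpha> = lam" by (auto simp: Gm_def)
    have "(\<Sum>i<k. \<alpha> i) = t" using sum_Gm[of k \<alpha>] g st by simp
    then show "\<alpha> \<in> {\<alpha> \<in> Aset k t. Gm k \<alpha> = lam}" using a g by (simp add: Aset_def)
  next
    fix \<alpha> assume "\<alpha> \<in> {\<alpha> \<in> Aset k t. Gm k \<alpha> = lam}"
    then have a: "\<forall>i. k \<le> i \<longrightarrow> \<alpha> i = 0" and s: "(\<Sum>i<k. \<alpha> i) = t" and g: "Gm k \<alpha> = lam"
      by (auto simp: Aset_def)
    have "\<alpha> i \<le> sum_mset lam" for i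
    proof (cases "i < k")
      case True
      then have "\<alpha> i \<le> (\<Sum>i<k. \<alpha> i)" by (intro member_le_sum) auto
      then show ?thesis using s st by simp
    next
      case False then show ?thesis using a by simp
    qed
    then show "\<alpha> \<in> {\<alpha> :: nat \<Rightarrow> nat. (\<forall>i. k \<le> i \<longrightarrow> \<alpha> i = 0) \<and> (\<forall>i. \<alpha> i \<le> sum_mset lam)
                  \<and> mset (filter (\<lambda>a. 0 < a) (map \<alpha> [0..<k])) = lam}"
      using a g by (auto simp: Gm_def)
  qed
qed

lemma mem_le_sum_mset: "a \<in># (M :: nat multiset) \<Longrightarrow> a \<le> sum_mset M"
proof -
  assume a: "a \<in># M"
  obtain M' where "M = add_mset a M'" using multi_member_split[OF a] by (elim exE)
  then show ?thesis by simp
qed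

lemma finite_parts: "finite {lam \<in> partitions t. size lam \<le> k}"
proof (rule finite_subset)
  show "{lam \<in> partitions t. size lam \<le> k} \<subseteq> (\<Union>n\<le>k. multisets_of_size {..t} n)"
  proof
    fix lam assume l: "lam \<in> {lam \<in> partitions t. size lam \<le> k}"
    then have "set_mset lam \<subseteq> {..t}"
      using mem_le_sum_mset unfolding partitions_def by fastforce
    then have "lam \<in> multisets_of_size {..t} (size lam)" by (simp add: multisets_of_size_def)
    then show "lam \<in> (\<Union>n\<le>k. multisets_of_size {..t} n)" using l by blast
  qed
  show "finite (\<Union>n\<le>k. multisets_of_size {..t} n)" by auto
qed

lemma Gm_in_parts:
  assumes "\<alpha> \<in> Aset k t" shows "Gm k \<alpha> \<in> {lam \<in> partitions t. size lam \<le> k}"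
proof -
  have "size (Gm k \<alpha>) \<le> k" 
    unfolding Gm_def size_mset using length_filter_le[of _ "map \<alpha> [0..<k]"] by simp
  moreover have "sum_mset (Gm k \<alpha>) = t" using assms by (simp add: sum_Gm Aset_def)
  ultimately show ?thesis by (auto simp: partitions_def Gm_def)
qed

lemma p_fun_alt:
  "p_fun q t xs = (\<Sum>\<alpha>\<in>Aset (length xs) t.
     q powi (- int (size (Gm (length xs) \<alpha>))) * (q - inverse q) ^ (size (Gm (length xs) \<alpha>) - 1)
     * (\<Prod>i<length xs. (xs ! i) ^ \<alpha> i))"
proof -
  let ?k = "length xs"
  let ?T = "{lam \<in> partitions t. size lam \<le> ?k}"
  let ?w = "\<lambda>n. q powi (- int n) * (q - inverse q) ^ (n - 1)"
  let ?m = "\<lambda>\<alpha>. (\<Prod>i<?k. (xs ! i) ^ \<alpha> i)"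
  have "p_fun q t xs = (\<Sum>lam\<in>?T. \<Sum>\<alpha>\<in>{\<alpha> \<in> Aset ?k t. Gm ?k \<alpha> = lam}. ?w (size lam) * ?m \<alpha>)"
    unfolding p_fun_def monomial_sym_def
  proof (intro sum.cong refl)
    fix lam assume "lam \<in> ?T"
    then have "lam \<in> partitions t" by simp
    then show "?w (size lam) * (\<Sum>\<alpha>\<in>{\<alpha> :: nat \<Rightarrow> nat. (\<forall>i. ?k \<le> i \<longrightarrow> \<alpha> i = 0) \<and> (\<forall>i. \<alpha> i \<le> sum_mset lam)
                  \<and> mset (filter (\<lambda>a. 0 < a) (map \<alpha> [0..<?k])) = lam}. ?m \<alpha>)
       = (\<Sum>\<alpha>\<in>{\<alpha> \<in> Aset ?k t. Gm ?k \<alpha> = lam}. ?w (size lam) * ?m \<alpha>)"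
      by (simp only: mono_set_eq sum_distrib_left)
  qed
  also have "\<dots> = (\<Sum>lam\<in>?T. \<Sum>\<alpha>\<in>{\<alpha> \<in> Aset ?k t. Gm ?k \<alpha> = lam}. ?w (size (Gm ?k \<alpha>)) * ?m \<alpha>)"
    by (intro sum.cong refl) auto
  also have "\<dots> = (\<Sum>\<alpha>\<in>Aset ?k t. ?w (size (Gm ?k \<alpha>)) * ?m \<alpha>)"
    by (rule sum.group) (use finite_Aset finite_parts Gm_in_parts in auto)
  finally show ?thesis .
qed

lemma cc_p_fun:
  assumes "0 < t"
  shows "cc q t xs = (q - inverse q) * p_fun q t xs"
proof -
  let ?k = "length xs"
  let ?f = "inverse q * (q - inverse q)"
  have "(\<Prod>i<?k. gw q (\<alpha> i) (xs ! i)) = (q - inverse q) *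
     (q powi (- int (size (Gm ?k \<alpha>))) * (q - inverse q) ^ (size (Gm ?k \<alpha>) - 1)
     * (\<Prod>i<?k. (xs ! i) ^ \<alpha> i))" if \<alpha>: "\<alpha> \<in> Aset ?k t" for \<alpha>
  proof -
    have "(\<Prod>i<?k. gw q (\<alpha> i) (xs ! i)) = (\<Prod>i<?k. (if \<alpha> i = 0 then 1 else ?f)) * (\<Prod>i<?k. (xs ! i) ^ \<alpha> i)"
      by (simp add: gw_def prod.distrib)
    also have "(\<Prod>i<?k. (if \<alpha> i = 0 then 1 else ?f)) = (\<Prod>i\<in>{i \<in> {..<?k}. \<alpha> i \<noteq> 0}. ?f)"
      by (subst prod.inter_filter) (auto intro!: prod.cong)
    also have "\<dots> = ?f ^ size (Gm ?k \<alpha>)"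
      by (simp add: size_Gm)
    finally have 1: "(\<Prod>i<?k. gw q (\<alpha> i) (xs ! i)) = ?f ^ size (Gm ?k \<alpha>) * (\<Prod>i<?k. (xs ! i) ^ \<alpha> i)" .
    have nz: "size (Gm ?k \<alpha>) \<noteq> 0"
    proof
      assume "size (Gm ?k \<alpha>) = 0"
      then have "Gm ?k \<alpha> = {#}" by simp
      then have "(\<Sum>i<?k. \<alpha> i) = 0" using sum_Gm[of ?k \<alpha>] by simp
      then show False using \<alpha> assms by (simp add: Aset_def)
    qed
    obtain m where m: "size (Gm ?k \<alpha>) = Suc m" using not0_implies_Suc[OF nz] by (elim exE)
    have pw: "q powi (- int (Suc m)) = inverse q ^ Suc m"
      by (metis power_int_minus power_int_of_nat power_inverse)
    show ?thesis unfolding 1 m pw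
      by (simp only: power_mult_distrib power_Suc mult_ac diff_Suc_1)
  qed
  then show ?thesis
    unfolding cc_def p_fun_alt sum_distrib_left
    by (intro sum.cong refl) simp
qed

lemma cc_0: "cc q 0 xs = 1"
proof (induction xs)
  case Nil then show ?case by (simp add: cc_Nil)
next
  case (Cons x xs) then show ?case by (simp add: cc_Cons gw_def)
qed



definition lin :: "complex \<Rightarrow> complex poly" where "lin c = [:1, - c:]"

lemma coeff_lin: "coeff (lin d) n = (if n = 0 then 1 else if n = 1 then - d else 0)"
  by (cases n; cases "n - 1") (auto simp: lin_def)

lemma fps_lin: "fps_of_poly (lin c) = 1 - fps_const c * fps_X"
  by (rule fps_ext) (simp add: coeff_lin)

lemma mult_lin_nth:
  "(F * fps_of_poly (lin c)) $ n = F $ n - (if n = 0 then 0 else c * F $ (n - 1))"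
proof -
  have "F * fps_of_poly (lin c) = F - fps_const c * (fps_X * F)"
    by (simp add: fps_lin algebra_simps)
  then show ?thesis by simp
qed

definition Cf :: "complex \<Rightarrow> complex list \<Rightarrow> complex fps" where
  "Cf q xs = Abs_fps (\<lambda>t. cc q t xs)"

definition Gf :: "complex \<Rightarrow> complex \<Rightarrow> complex fps" where
  "Gf q x = Abs_fps (\<lambda>a. gw q a x)"

lemma Cf_Nil: "Cf q [] = 1"
  by (rule fps_ext) (simp add: Cf_def cc_Nil)

lemma Cf_Cons: "Cf q (x # xs) = Gf q x * Cf q xs"
  by (rule fps_ext) (simp add: Cf_def Gf_def fps_mult_nth cc_Cons atLeast0AtMost)

lemma Gf_lin:
  assumes "q \<noteq> 0"
  shows "Gf q x * fps_of_poly (lin x) = fps_of_poly (lin (inverse q ^ 2 * x))"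
proof (rule fps_ext)
  fix n
  show "(Gf q x * fps_of_poly (lin x)) $ n = fps_of_poly (lin (inverse q ^ 2 * x)) $ n"
  proof (cases n)
    case 0 then show ?thesis by (simp add: mult_lin_nth coeff_lin Gf_def gw_def)
  next
    case (Suc m)
    show ?thesis
    proof (cases m)
      case 0 then show ?thesis using Suc assms
        by (simp add: mult_lin_nth coeff_lin Gf_def gw_def field_simps power2_eq_square)
    next
      case (Suc k)
      then show ?thesis using \<open>n = Suc m\<close>
        by (simp add: mult_lin_nth coeff_lin Gf_def gw_def)
    qed
  qed
qed

lemma Cf_prod:
  assumes "q \<noteq> 0"
  shows "Cf q xs * fps_of_poly (prod_list (map lin xs))
         = fps_of_poly (prod_list (map (\<lambda>x. lin (inverse q ^ 2 * x)) xs))"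
proof (induction xs)
  case Nil then show ?case by (simp add: Cf_Nil)
next
  case (Cons x xs)
  have "Cf q (x # xs) * fps_of_poly (prod_list (map lin (x # xs)))
      = (Gf q x * fps_of_poly (lin x)) * (Cf q xs * fps_of_poly (prod_list (map lin xs)))"
    by (simp add: Cf_Cons fps_of_poly_mult mult_ac)
  also have "\<dots> = fps_of_poly (prod_list (map (\<lambda>x. lin (inverse q ^ 2 * x)) (x # xs)))"
    by (simp add: Gf_lin[OF assms] Cons fps_of_poly_mult)
  finally show ?case .
qed

definition Hf :: "complex \<Rightarrow> complex \<Rightarrow> complex fps" where
  "Hf Q \<beta> = Abs_fps (\<lambda>s. if s = 0 then 1 else (1 - \<beta> powi (-2)) * inverse Q ^ s)"

lemma Hf_lin:
  "Hf Q \<beta> * fps_of_poly (lin (inverse Q)) = fps_of_poly (lin (\<beta> powi (-2) * inverse Q))"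
proof (rule fps_ext)
  fix n
  show "(Hf Q \<beta> * fps_of_poly (lin (inverse Q))) $ n = fps_of_poly (lin (\<beta> powi (-2) * inverse Q)) $ n"
  proof (cases n)
    case 0 then show ?thesis by (simp add: mult_lin_nth coeff_lin Hf_def)
  next
    case (Suc m)
    show ?thesis
    proof (cases m)
      case 0 then show ?thesis using Suc
        by (simp add: mult_lin_nth coeff_lin Hf_def algebra_simps)
    next
      case (Suc k)
      then show ?thesis using \<open>n = Suc m\<close>
        by (simp add: mult_lin_nth coeff_lin Hf_def)
    qed
  qed
qed

definition Ef :: "complex \<Rightarrow> complex \<Rightarrow> complex \<Rightarrow> complex list \<Rightarrow> complex fps" where
  "Ef q Q \<beta> xs = Abs_fps (\<lambda>t. if t = 0 then 1 else (q - inverse q) * pQ_fun q Q \<beta> t xs)"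

lemma powi_neg_nat: "(Q::complex) powi (- int n) = inverse (Q ^ n)"
  by (simp add: power_int_minus)

lemma powi_Q:
  fixes Q :: complex
  assumes "Q \<noteq> 0" "z \<le> t"
  shows "Q powi (- int t + int z) = inverse Q ^ (t - z)"
proof -
  have e: "- int t + int z = - int (t - z)" using assms by simp
  have "Q powi (- int t + int z) = Q powi (- int (t - z))" by (simp only: e)
  also have "\<dots> = inverse (Q ^ (t - z))" by (rule powi_neg_nat)
  also have "\<dots> = inverse Q ^ (t - z)" by (rule power_inverse[symmetric])
  finally show ?thesis .
qed

lemma Ef_eq:
  assumes "q - inverse q \<noteq> 0" "Q \<noteq> 0"
  shows "Ef q Q \<beta> xs = Cf q xs * Hf Q \<beta>"
proof (rule fps_ext)
  fix n
  let ?h = "\<lambda>s. if s = 0 then 1 else (1 - \<beta> powi (-2)) * inverse Q ^ s"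
  have qb: "(q - inverse q) * beta_tilde q \<beta> = 1 - \<beta> powi (-2)"
    using assms by (simp add: beta_tilde_def)
  show "Ef q Q \<beta> xs $ n = (Cf q xs * Hf Q \<beta>) $ n"
  proof (cases n)
    case 0 then show ?thesis by (simp add: Ef_def Cf_def Hf_def fps_mult_nth cc_0)
  next
    case (Suc m)
    have "(Cf q xs * Hf Q \<beta>) $ n = (\<Sum>i=0..Suc m. cc q i xs * ?h (Suc m - i))"
      by (simp add: Suc fps_mult_nth Cf_def Hf_def)
    also have "\<dots> = cc q 0 xs * ?h (Suc m) + (\<Sum>i=1..m. cc q i xs * ?h (Suc m - i)) + cc q (Suc m) xs"
      by (simp add: sum.atLeast0_atMost_Suc sum.atLeast_Suc_atMost[of 0 m] One_nat_def)
    also have "\<dots> = (1 - \<beta> powi (-2)) * inverse Q ^ (Suc m)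
       + (\<Sum>i=1..m. (q - inverse q) * ((q - inverse q) * (beta_tilde q \<beta> * Q powi (- int (Suc m) + int i) * p_fun q i xs)))
       + (q - inverse q) * p_fun q (Suc m) xs"
    proof -
      have "(\<Sum>i=1..m. cc q i xs * ?h (Suc m - i))
         = (\<Sum>i=1..m. (q - inverse q) * ((q - inverse q) * (beta_tilde q \<beta> * Q powi (- int (Suc m) + int i) * p_fun q i xs)))"
      proof (intro sum.cong refl)
        fix i assume i: "i \<in> {1..m}"
        have "Q powi (- int (Suc m) + int i) = inverse Q ^ (Suc m - i)"
          using i assms by (intro powi_Q) auto
        then show "cc q i xs * ?h (Suc m - i) = (q - inverse q) * ((q - inverse q) * (beta_tilde q \<beta> * Q powi (- int (Suc m) + int i) * p_fun q i xs))"
          using i qb by (simp add: cc_p_fun mult_ac)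
      qed
      then show ?thesis by (simp add: cc_0 cc_p_fun)
    qed
    also have "\<dots> = (q - inverse q) * pQ_fun q Q \<beta> n xs"
    proof -
      have QP: "Q powi (- int (Suc m)) = inverse Q ^ Suc m"
        using powi_Q[OF assms(2), of 0 "Suc m"] by simp
      let ?X = "\<lambda>i. beta_tilde q \<beta> * Q powi (- int (Suc m) + int i) * p_fun q i xs"
      have S: "(\<Sum>i=1..m. (q - inverse q) * ((q - inverse q) * ?X i)) = (q - inverse q) * ((q - inverse q) * (\<Sum>i=1..m. ?X i))"
        by (simp only: sum_distrib_left)
      have T: "(q - inverse q) * (beta_tilde q \<beta> * Q powi (- int (Suc m))) = (1 - \<beta> powi (-2)) * inverse Q ^ Suc m"
        using qb QP by (simp only: mult.assoc[symmetric])
      show ?thesis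
        unfolding Suc pQ_fun_def diff_Suc_1 distrib_left S T by (simp only: ac_simps)
    qed
    finally show ?thesis by (simp add: Ef_def Suc)
  qed
qed



definition PM :: "complex multiset \<Rightarrow> complex poly" where
  "PM M = prod_mset (image_mset lin M)"

lemma PM_empty [simp]: "PM {#} = 1" by (simp add: PM_def)
lemma PM_add_mset [simp]: "PM (add_mset c M) = lin c * PM M" by (simp add: PM_def)
lemma PM_plus: "PM (M1 + M2) = PM M1 * PM M2" by (simp add: PM_def)
lemma lin_nz [simp]: "lin c \<noteq> 0" by (simp add: lin_def)
lemma PM_nz: "PM M \<noteq> 0" by (induction M) auto
lemma poly_lin: "poly (lin c) y = 1 - c * y" by (simp add: lin_def)
lemma lin_0: "lin 0 = 1" by (simp add: lin_def one_pCons)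

lemma poly_PM_zero: "poly (PM M) y = 0 \<longleftrightarrow> (\<exists>c\<in>#M. c * y = 1)"
  by (induction M) (auto simp: poly_lin)

lemma PM_filter:
  "PM M1 = PM M2 \<Longrightarrow> filter_mset (\<lambda>c. c \<noteq> 0) M1 = filter_mset (\<lambda>c. c \<noteq> 0) M2"
proof (induction M1 arbitrary: M2)
  case empty
  have "\<not> (\<exists>c\<in>#M2. c \<noteq> 0)"
  proof
    assume "\<exists>c\<in>#M2. c \<noteq> 0"
    then obtain c where c: "c \<in># M2" "c \<noteq> 0" by blast
    then have "poly (PM M2) (inverse c) = 0" by (auto simp: poly_PM_zero intro!: bexI[of _ c])
    then show False using empty by simp
  qed
  then show ?case by auto
next
  case (add c M1)
  show ?case
  proof (cases "c = 0")
    case True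
    then show ?thesis using add by (simp add: lin_0)
  next
    case False
    have "poly (PM (add_mset c M1)) (inverse c) = 0" using False by (simp add: poly_lin)
    then have "poly (PM M2) (inverse c) = 0" using add.prems by (simp only:)
    then obtain c' where c': "c' \<in># M2" "c' * inverse c = 1" by (auto simp: poly_PM_zero)
    then have "c' = c" using False by (simp add: field_simps)
    then obtain M2' where M2: "M2 = add_mset c M2'" using c' multi_member_split by metis
    have "lin c * PM M1 = lin c * PM M2'" using add.prems M2 by simp
    then have "PM M1 = PM M2'" by simp
    then have "filter_mset (\<lambda>c. c \<noteq> 0) M1 = filter_mset (\<lambda>c. c \<noteq> 0) M2'" by (rule add.IH)
    then show ?thesis using M2 False by simp
  qed
qed

lemma filter_size_eq:
  assumes "filter_mset (\<lambda>c. c \<noteq> (0::complex)) M1 = filter_mset (\<lambda>c. c \<noteq> 0) M2"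
    and "size M1 = size M2"
  shows "M1 = M2"
proof -
  have sz: "size M = size (filter_mset (\<lambda>c. c \<noteq> 0) M) + count M 0" for M :: "complex multiset"
  proof -
    have "M = filter_mset (\<lambda>c. c \<noteq> 0) M + filter_mset (\<lambda>c. \<not> c \<noteq> 0) M"
      by (rule multiset_partition)
    also have "filter_mset (\<lambda>c. \<not> c \<noteq> 0) M = replicate_mset (count M 0) 0"
      by (simp only: not_not filter_eq_replicate_mset)
    finally show ?thesis by (metis size_replicate_mset size_union)
  qed
  have c0: "count M1 0 = count M2 0" using sz[of M1] sz[of M2] assms by simp
  show ?thesis
  proof (rule multiset_eqI)
    fix x
    show "count M1 x = count M2 x"
    proof (cases "x = 0")
      case True then show ?thesis using c0 by simp
    next
      case False
      then show ?thesis using arg_cong[OF assms(1), of "\<lambda>M. count M x"] by simp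
    qed
  qed
qed

lemma PM_inj: "PM M1 = PM M2 \<Longrightarrow> size M1 = size M2 \<Longrightarrow> M1 = M2"
  using PM_filter filter_size_eq by blast

lemma count_smul:
  assumes "s \<noteq> (0::complex)"
  shows "count (image_mset ((*) s) A) (s * z) = count A z"
proof -
  have pre: "((*) s) -` {s * z} = {z}" using assms by auto
  show ?thesis
    by (cases "z \<in># A") (simp_all add: count_image_mset pre not_in_iff)
qed

lemma shift_mset:
  fixes s :: complex
  assumes s0: "s \<noteq> 0" and nr: "\<forall>m::nat. 0 < m \<longrightarrow> s ^ m \<noteq> 1"
    and sz: "size A = size A'"
    and eq: "image_mset ((*) s) A + A' = image_mset ((*) s) A' + A"
  shows "A = A'"
proof -
  have step: "count A z \<noteq> count A' z \<Longrightarrow> count A (s * z) \<noteq> count A' (s * z)" for z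
  proof -
    have "count (image_mset ((*) s) A + A') (s * z) = count (image_mset ((*) s) A' + A) (s * z)"
      using eq by simp
    then have "count A z + count A' (s * z) = count A' z + count A (s * z)"
      by (simp add: count_smul[OF s0])
    then show "count A z \<noteq> count A' z \<Longrightarrow> count A (s * z) \<noteq> count A' (s * z)" by simp
  qed
  have nz: "count A x = count A' x" if x: "x \<noteq> 0" for x
  proof (rule ccontr)
    assume ne: "count A x \<noteq> count A' x"
    have all: "count A (s ^ m * x) \<noteq> count A' (s ^ m * x)" for m
    proof (induction m)
      case 0 then show ?case using ne by simp
    next
      case (Suc m)
      then show ?case using step[of "s ^ m * x"] by (simp add: mult.assoc)
    qed
    have inj: "inj (\<lambda>m::nat. s ^ m * x)"
    proof (rule injI)
      fix m n :: nat assume "s ^ m * x = s ^ n * x"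
      then have e: "s ^ m = s ^ n" using x by simp
      show "m = n"
      proof (rule ccontr)
        assume "m \<noteq> n"
        then consider "m < n" | "n < m" by linarith
        then show False
        proof cases
          case 1
          then have "s ^ n = s ^ m * s ^ (n - m)" by (simp add: power_add[symmetric])
          then have "s ^ (n - m) = 1" using e s0 by simp
          then show False using nr 1 by simp
        next
          case 2
          then have "s ^ m = s ^ n * s ^ (m - n)" by (simp add: power_add[symmetric])
          then have "s ^ (m - n) = 1" using e s0 by simp
          then show False using nr 2 by simp
        qed
      qed
    qed
    have "range (\<lambda>m::nat. s ^ m * x) \<subseteq> set_mset A \<union> set_mset A'"
      using all by (auto simp: count_eq_zero_iff[symmetric]) (metis count_eq_zero_iff)
    moreover have "infinite (range (\<lambda>m::nat. s ^ m * x))" by (rule range_inj_infinite[OF inj])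
    ultimately show False using finite_subset by auto
  qed
  have "filter_mset (\<lambda>c. c \<noteq> 0) A = filter_mset (\<lambda>c. c \<noteq> 0) A'"
    by (rule multiset_eqI) (simp add: nz)
  then show ?thesis using sz by (rule filter_size_eq)
qed

definition Rm :: "complex \<Rightarrow> complex \<Rightarrow> nat \<Rightarrow> complex multiset" where
  "Rm a s n = image_mset (\<lambda>j. a * s ^ j) (mset [0..<n])"

lemma Rm_Suc: "Rm a s (Suc n) = Rm a s n + {#a * s ^ n#}"
  by (simp add: Rm_def)

lemma size_Rm: "size (Rm a s n) = n" by (simp add: Rm_def)

lemma Rm_shift: "add_mset a (image_mset ((*) s) (Rm a s n)) = Rm a s n + {#a * s ^ n#}"
proof (induction n)
  case 0 then show ?case by (simp add: Rm_def)
next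
  case (Suc n)
  have "add_mset a (image_mset ((*) s) (Rm a s (Suc n)))
       = add_mset a (image_mset ((*) s) (Rm a s n)) + {#s * (a * s ^ n)#}"
    by (simp add: Rm_Suc)
  also have "\<dots> = Rm a s (Suc n) + {#a * s ^ Suc n#}"
    by (simp add: Suc Rm_Suc mult_ac)
  finally show ?case .
qed

lemma mset_conclusion:
  fixes s a :: complex
  assumes s0: "s \<noteq> 0" and nr: "\<forall>m::nat. 0 < m \<longrightarrow> s ^ m \<noteq> 1"
    and sz: "size A = size B + n"
    and E1: "add_mset a (image_mset ((*) s) A + B) = add_mset (a * s ^ n) (image_mset ((*) s) B + A)"
  shows "A = B + Rm a s n"
proof -
  let ?A' = "B + Rm a s n"
  let ?X = "add_mset a B" and ?Y = "add_mset (a * s ^ n) (image_mset ((*) s) B)"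
  have e1: "?X + image_mset ((*) s) A = ?Y + A" using E1 by (simp add: ac_simps)
  have "add_mset a (image_mset ((*) s) ?A' + B) = image_mset ((*) s) B + B + add_mset a (image_mset ((*) s) (Rm a s n))"
    by (simp add: ac_simps)
  also have "\<dots> = add_mset (a * s ^ n) (image_mset ((*) s) B + ?A')"
    by (simp add: Rm_shift ac_simps)
  finally have "?X + image_mset ((*) s) ?A' = ?Y + ?A'" by (simp add: ac_simps)
  then have e2: "?Y + ?A' = ?X + image_mset ((*) s) ?A'" by simp
  have "(?X + ?Y) + (image_mset ((*) s) A + ?A') = (?X + image_mset ((*) s) A) + (?Y + ?A')"
    by (simp add: ac_simps)
  also have "\<dots> = (?Y + A) + (?X + image_mset ((*) s) ?A')" by (simp only: e1 e2)
  also have "\<dots> = (?X + ?Y) + (image_mset ((*) s) ?A' + A)" by (simp add: ac_simps)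
  finally have "image_mset ((*) s) A + ?A' = image_mset ((*) s) ?A' + A" by (rule add_left_imp_eq)
  moreover have "size A = size ?A'" using sz by (simp add: size_Rm)
  ultimately show ?thesis using shift_mset[OF s0 nr] by blast
qed



lemma PM_list: "PM (image_mset f (mset xs)) = prod_list (map (\<lambda>x. lin (f x)) xs)"
  by (induction xs) auto

lemma PM_list': "PM (mset xs) = prod_list (map lin xs)"
  using PM_list[of "\<lambda>x. x" xs] by simp

lemma Ef_PM:
  assumes "q \<noteq> 0" "q - inverse q \<noteq> 0" "Q \<noteq> 0"
  shows "Ef q Q \<beta> xs * fps_of_poly (PM (add_mset (inverse Q) (mset xs)))
       = fps_of_poly (PM (add_mset (\<beta> powi (-2) * inverse Q) (image_mset ((*) (inverse q ^ 2)) (mset xs))))"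
proof -
  have "Ef q Q \<beta> xs * fps_of_poly (PM (add_mset (inverse Q) (mset xs)))
      = (Hf Q \<beta> * fps_of_poly (lin (inverse Q))) * (Cf q xs * fps_of_poly (prod_list (map lin xs)))"
    by (simp add: Ef_eq[OF assms(2,3)] PM_list' fps_of_poly_mult mult_ac)
  also have "\<dots> = fps_of_poly (lin (\<beta> powi (-2) * inverse Q)) * fps_of_poly (prod_list (map (\<lambda>x. lin (inverse q ^ 2 * x)) xs))"
    by (simp only: Hf_lin Cf_prod[OF assms(1)])
  also have "\<dots> = fps_of_poly (PM (add_mset (\<beta> powi (-2) * inverse Q) (image_mset ((*) (inverse q ^ 2)) (mset xs))))"
    by (simp add: PM_list fps_of_poly_mult)
  finally show ?thesis .
qed

lemma mset_root_list: "mset (root_list \<phi>) = proots \<phi>"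
  unfolding root_list_def by (rule someI_ex) (rule ex_mset)

lemma p_fun_Nil: "q - inverse q \<noteq> 0 \<Longrightarrow> 0 < t \<Longrightarrow> p_fun q t [] = 0"
  using cc_p_fun[of t q "[]"] by (simp add: cc_Nil)

lemma uQ_form:
  assumes "q - inverse q \<noteq> 0" "\<phi> \<noteq> 0"
  shows "uQ q Q \<phi> = (lead_coeff \<phi> * q ^ degree \<phi>,
     \<lambda>t. if t = 0 then 0 else pQ_fun q Q (lead_coeff \<phi>) t (root_list \<phi>))"
proof (cases "degree \<phi> = 0")
  case True
  have "size (proots \<phi>) = 0" using True by (simp add: size_proots_complex)
  then have "root_list \<phi> = []" using mset_root_list[of \<phi>] by simp
  moreover have "pQ_fun q Q \<beta> t [] = beta_tilde q \<beta> * Q powi (- int t)" if "0 < t" for \<beta> t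
    using that assms(1) by (simp add: pQ_fun_def p_fun_Nil)
  ultimately show ?thesis using True by (simp add: uQ_def fun_eq_iff)
next
  case False
  then show ?thesis by (simp add: uQ_def)
qed

lemma seq_iff_Ef:
  assumes "q - inverse q \<noteq> 0"
  shows "((\<lambda>t. if t = 0 then 0 else pQ_fun q Q \<beta> t xs) = (\<lambda>t. if t = 0 then 0 else pQ_fun q Q \<beta>' t xs'))
     \<longleftrightarrow> Ef q Q \<beta> xs = Ef q Q \<beta>' xs'"
proof
  assume "(\<lambda>t. if t = 0 then 0 else pQ_fun q Q \<beta> t xs) = (\<lambda>t. if t = 0 then 0 else pQ_fun q Q \<beta>' t xs')"
  then have "\<And>t. 0 < t \<Longrightarrow> pQ_fun q Q \<beta> t xs = pQ_fun q Q \<beta>' t xs'"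
    by (metis (no_types, lifting) not_gr_zero)
  then show "Ef q Q \<beta> xs = Ef q Q \<beta>' xs'"
    by (intro fps_ext) (simp add: Ef_def)
next
  assume "Ef q Q \<beta> xs = Ef q Q \<beta>' xs'"
  then have h: "\<And>t. Ef q Q \<beta> xs $ t = Ef q Q \<beta>' xs' $ t" by simp
  have "pQ_fun q Q \<beta> t xs = pQ_fun q Q \<beta>' t xs'" if t: "0 < t" for t
  proof -
    have "(q - inverse q) * pQ_fun q Q \<beta> t xs = (q - inverse q) * pQ_fun q Q \<beta>' t xs'"
      using h[of t] t by (simp add: Ef_def)
    then show ?thesis using assms by simp
  qed
  then have "\<And>t. 0 < t \<Longrightarrow> pQ_fun q Q \<beta> t xs = pQ_fun q Q \<beta>' t xs'" by blast
  then show "(\<lambda>t. if t = 0 then 0 else pQ_fun q Q \<beta> t xs) = (\<lambda>t. if t = 0 then 0 else pQ_fun q Q \<beta>' t xs')"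
    by (auto simp: fun_eq_iff)
qed

definition Nm :: "complex \<Rightarrow> complex \<Rightarrow> complex poly \<Rightarrow> complex multiset" where
  "Nm q Q \<phi> = add_mset (lead_coeff \<phi> powi (-2) * inverse Q) (image_mset ((*) (inverse q ^ 2)) (proots \<phi>))"

definition Dm :: "complex \<Rightarrow> complex poly \<Rightarrow> complex multiset" where
  "Dm Q \<phi> = add_mset (inverse Q) (proots \<phi>)"

lemma uQ_iff:
  assumes "q \<noteq> 0" "q - inverse q \<noteq> 0" "Q \<noteq> 0" "\<phi> \<noteq> 0" "\<phi>' \<noteq> 0"
  shows "uQ q Q \<phi> = uQ q Q \<phi>' \<longleftrightarrow>
    lead_coeff \<phi> * q ^ degree \<phi> = lead_coeff \<phi>' * q ^ degree \<phi>' \<and>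
    Nm q Q \<phi> + Dm Q \<phi>' = Nm q Q \<phi>' + Dm Q \<phi>"
proof -
  let ?E = "Ef q Q (lead_coeff \<phi>) (root_list \<phi>)" and ?E' = "Ef q Q (lead_coeff \<phi>') (root_list \<phi>')"
  have e1: "?E * fps_of_poly (PM (Dm Q \<phi>)) = fps_of_poly (PM (Nm q Q \<phi>))"
    using Ef_PM[OF assms(1-3), of "lead_coeff \<phi>" "root_list \<phi>"] by (simp add: mset_root_list Nm_def Dm_def)
  have e2: "?E' * fps_of_poly (PM (Dm Q \<phi>')) = fps_of_poly (PM (Nm q Q \<phi>'))"
    using Ef_PM[OF assms(1-3), of "lead_coeff \<phi>'" "root_list \<phi>'"] by (simp add: mset_root_list Nm_def Dm_def)
  have nz: "fps_of_poly (PM (Dm Q \<phi>)) * fps_of_poly (PM (Dm Q \<phi>')) \<noteq> 0"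
    by (simp add: PM_nz fps_of_poly_eq_iff[of _ 0, simplified])
  have "?E = ?E' \<longleftrightarrow> PM (Nm q Q \<phi> + Dm Q \<phi>') = PM (Nm q Q \<phi>' + Dm Q \<phi>)"
  proof
    assume "?E = ?E'"
    then have "fps_of_poly (PM (Nm q Q \<phi> + Dm Q \<phi>')) = fps_of_poly (PM (Nm q Q \<phi>' + Dm Q \<phi>))"
    proof -
      have "fps_of_poly (PM (Nm q Q \<phi> + Dm Q \<phi>')) = (?E * fps_of_poly (PM (Dm Q \<phi>))) * fps_of_poly (PM (Dm Q \<phi>'))"
        by (simp only: PM_plus fps_of_poly_mult e1)
      also have "\<dots> = (?E' * fps_of_poly (PM (Dm Q \<phi>'))) * fps_of_poly (PM (Dm Q \<phi>))"
        using \<open>?E = ?E'\<close> by (simp only: mult_ac)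
      also have "\<dots> = fps_of_poly (PM (Nm q Q \<phi>' + Dm Q \<phi>))"
        by (simp only: PM_plus fps_of_poly_mult e2)
      finally show ?thesis .
    qed
    then show "PM (Nm q Q \<phi> + Dm Q \<phi>') = PM (Nm q Q \<phi>' + Dm Q \<phi>)" by (simp add: fps_of_poly_eq_iff)
  next
    assume h: "PM (Nm q Q \<phi> + Dm Q \<phi>') = PM (Nm q Q \<phi>' + Dm Q \<phi>)"
    have "?E * (fps_of_poly (PM (Dm Q \<phi>)) * fps_of_poly (PM (Dm Q \<phi>')))
        = fps_of_poly (PM (Nm q Q \<phi> + Dm Q \<phi>'))"
      using e1 by (simp add: PM_plus fps_of_poly_mult mult.assoc[symmetric])
    also have "\<dots> = fps_of_poly (PM (Nm q Q \<phi>' + Dm Q \<phi>))" using h by simp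
    also have "\<dots> = ?E' * (fps_of_poly (PM (Dm Q \<phi>)) * fps_of_poly (PM (Dm Q \<phi>')))"
      using e2 by (simp add: PM_plus fps_of_poly_mult mult_ac)
    finally show "?E = ?E'" using nz by (simp add: mult_right_cancel)
  qed
  also have "\<dots> \<longleftrightarrow> Nm q Q \<phi> + Dm Q \<phi>' = Nm q Q \<phi>' + Dm Q \<phi>"
  proof
    assume "PM (Nm q Q \<phi> + Dm Q \<phi>') = PM (Nm q Q \<phi>' + Dm Q \<phi>)"
    moreover have "size (Nm q Q \<phi> + Dm Q \<phi>') = size (Nm q Q \<phi>' + Dm Q \<phi>)"
      by (simp add: Nm_def Dm_def)
    ultimately show "Nm q Q \<phi> + Dm Q \<phi>' = Nm q Q \<phi>' + Dm Q \<phi>" by (rule PM_inj)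
  qed simp
  finally have EE: "?E = ?E' \<longleftrightarrow> Nm q Q \<phi> + Dm Q \<phi>' = Nm q Q \<phi>' + Dm Q \<phi>" .
  show ?thesis
    unfolding uQ_form[OF assms(2,4)] uQ_form[OF assms(2,5)] prod.inject seq_iff_Ef[OF assms(2)] EE ..
qed



definition LP :: "complex multiset \<Rightarrow> complex poly" where
  "LP M = prod_mset (image_mset (\<lambda>x. [:-x, 1:]) M)"

lemma LP_add_mset: "LP (add_mset x M) = [:-x, 1:] * LP M"
  by (simp only: LP_def image_mset_add_mset prod_mset.add_mset)
lemma LP_plus: "LP (M1 + M2) = LP M1 * LP M2" by (simp add: LP_def)
lemma lin1_nz: "[:-x, 1:] \<noteq> (0::complex poly)" by simp
lemma LP_nz: "LP M \<noteq> 0"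
proof (induction M)
  case empty then show ?case by (simp add: LP_def)
next
  case (add x M)
  then show ?case unfolding LP_add_mset using lin1_nz[of x] by (simp only: mult_eq_0_iff) simp
qed
lemma LP_lead: "lead_coeff (LP M) = 1"
proof (induction M)
  case empty then show ?case by (simp add: LP_def)
next
  case (add x M)
  have "lead_coeff [:-x, 1:] = (1::complex)" by simp
  then show ?case unfolding LP_add_mset lead_coeff_mult using add by simp
qed
lemma LP_proots: "proots (LP M) = M"
proof (induction M)
  case empty then show ?case by (simp add: LP_def)
next
  case (add x M)
  have "proots [:-x, 1:] = {#x#}" using proots_linear_factor[of "-x"] by simp
  moreover have "proots ([:-x, 1:] * LP M) = proots [:-x, 1:] + proots (LP M)"
    by (rule proots_mult[OF lin1_nz LP_nz])
  ultimately show ?case unfolding LP_add_mset using add by simp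
qed

lemma decomp: "\<phi> = smult (lead_coeff \<phi>) (LP (proots \<phi>))"
  unfolding LP_def using complex_poly_decompose_multiset[of \<phi>] by simp

lemma pm2: "(z::complex) powi (-2) = inverse (z ^ 2)"
  by (simp add: power_int_minus)

lemma qpow: "(q::complex) powi (- 2 * (int (Suc j) - 1)) = (inverse q ^ 2) ^ j"
proof -
  have "- 2 * (int (Suc j) - 1) = - int (2 * j)" by simp
  then have "q powi (- 2 * (int (Suc j) - 1)) = inverse (q ^ (2 * j))" using powi_neg_nat[of q "2 * j"] by simp
  then show ?thesis by (simp add: power_mult power_inverse)
qed

lemma Lprod:
  fixes q b iQ :: complex
  shows "(\<Prod>z=1..n. [: - (q powi (- 2 * (int z - 1)) * b * iQ), 1 :]) = LP (Rm (b * iQ) (inverse q ^ 2) n)"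
proof (induction n)
  case 0 then show ?case by (simp add: Rm_def LP_def)
next
  case (Suc n)
  have "(\<Prod>z=1..Suc n. [: - (q powi (- 2 * (int z - 1)) * b * iQ), 1 :])
      = (\<Prod>z=1..n. [: - (q powi (- 2 * (int z - 1)) * b * iQ), 1 :]) * [: - (q powi (- 2 * (int (Suc n) - 1)) * b * iQ), 1 :]"
    by simp
  also have "\<dots> = LP (Rm (b * iQ) (inverse q ^ 2) n) * [: - (b * iQ * (inverse q ^ 2) ^ n), 1 :]"
  proof -
    have "q powi (- 2 * (int (Suc n) - 1)) * b * iQ = b * iQ * (inverse q ^ 2) ^ n"
      using qpow[of q n] by simp
    then show ?thesis by (simp only: Suc)
  qed
  also have "\<dots> = LP (Rm (b * iQ) (inverse q ^ 2) (Suc n))"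
    by (simp add: Rm_Suc LP_plus LP_def)
  finally show ?case .
qed

lemma aprime:
  fixes q \<beta> \<beta>' Q :: complex
  assumes "q \<noteq> 0" "\<beta>' = \<beta> * q ^ n"
  shows "\<beta>' powi (-2) * inverse Q = (\<beta> powi (-2) * inverse Q) * (inverse q ^ 2) ^ n"
proof -
  have "inverse ((\<beta> * q ^ n)^2) = inverse (\<beta>^2) * (inverse q ^ 2) ^ n"
    by (metis mult.commute power_inverse power_mult power_mult_distrib inverse_mult_distrib)
  then show ?thesis using assms(2) by (simp add: pm2)
qed

lemma part_i:
  fixes q Q :: complex
  assumes q0: "q \<noteq> 0" and nr: "\<forall>n::nat. 0 < n \<longrightarrow> q ^ n \<noteq> 1" and Q0: "Q \<noteq> 0"
    and f0: "\<phi> \<noteq> 0" and f0': "\<phi>' \<noteq> 0" and dle: "degree \<phi>' \<le> degree \<phi>"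
  shows "uQ q Q \<phi> = uQ q Q \<phi>' \<longleftrightarrow>
            \<phi> = smult (q powi (- int (degree \<phi> - degree \<phi>')))
                   (\<phi>' * (\<Prod>z=1..degree \<phi> - degree \<phi>'.
                      [: - (q powi (- 2 * (int z - 1)) * (lead_coeff \<phi>) powi (-2) * inverse Q), 1 :]))"
proof -
  define n where "n = degree \<phi> - degree \<phi>'"
  define s where "s = inverse q ^ 2"
  define \<beta> where "\<beta> = lead_coeff \<phi>"
  define \<beta>' where "\<beta>' = lead_coeff \<phi>'"
  define a where "a = \<beta> powi (-2) * inverse Q"
  define A where "A = proots \<phi>"
  define B where "B = proots \<phi>'"
  have dn: "degree \<phi> = degree \<phi>' + n" using dle by (simp add: n_def)
  have q2: "q ^ 2 \<noteq> 1" using nr by simp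
  have qi: "q - inverse q \<noteq> 0"
  proof
    assume "q - inverse q = 0"
    then have "q * q = 1" using q0 by (simp add: field_simps)
    then show False using q2 by (simp add: power2_eq_square)
  qed
  have s0: "s \<noteq> 0" using q0 by (simp add: s_def)
  have snr: "\<forall>m::nat. 0 < m \<longrightarrow> s ^ m \<noteq> 1"
  proof (intro allI impI)
    fix m :: nat assume m: "0 < m"
    show "s ^ m \<noteq> 1"
    proof
      assume "s ^ m = 1"
      then have "inverse (q ^ (2 * m)) = 1" by (simp add: s_def power_mult power_inverse)
      then have "q ^ (2 * m) = 1" by (metis inverse_1 inverse_inverse_eq)
      then show False using nr m by simp
    qed
  qed
  have Lp: "(\<Prod>z=1..n. [: - (q powi (- 2 * (int z - 1)) * \<beta> powi (-2) * inverse Q), 1 :]) = LP (Rm a s n)"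
    unfolding a_def s_def by (rule Lprod)
  have sA: "size A = size B + n" using dn by (simp add: A_def B_def size_proots_complex)
  have cq: "q powi (- int n) * q ^ n = 1" using q0 by (simp add: powi_neg_nat)
  have iff: "uQ q Q \<phi> = uQ q Q \<phi>' \<longleftrightarrow> \<beta> * q ^ degree \<phi> = \<beta>' * q ^ degree \<phi>' \<and>
      Nm q Q \<phi> + Dm Q \<phi>' = Nm q Q \<phi>' + Dm Q \<phi>"
    unfolding \<beta>_def \<beta>'_def by (rule uQ_iff[OF q0 qi Q0 f0 f0'])
  have Nm1: "Nm q Q \<phi> = add_mset a (image_mset ((*) s) A)" by (simp add: Nm_def a_def \<beta>_def s_def A_def)
  have Dm1: "Dm Q \<phi> = add_mset (inverse Q) A" by (simp add: Dm_def A_def)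
  have Dm2: "Dm Q \<phi>' = add_mset (inverse Q) B" by (simp add: Dm_def B_def)
  have Nm2: "\<beta>' = \<beta> * q ^ n \<Longrightarrow> Nm q Q \<phi>' = add_mset (a * s ^ n) (image_mset ((*) s) B)"
    using aprime[OF q0, of \<beta>' \<beta> n Q] by (simp add: Nm_def a_def \<beta>'_def s_def B_def)
  show ?thesis
    unfolding n_def[symmetric] \<beta>_def[symmetric] Lp
  proof
    assume "uQ q Q \<phi> = uQ q Q \<phi>'"
    then have h1: "\<beta> * q ^ degree \<phi> = \<beta>' * q ^ degree \<phi>'" and h2: "Nm q Q \<phi> + Dm Q \<phi>' = Nm q Q \<phi>' + Dm Q \<phi>"
      using iff by auto
    have bb: "\<beta>' = \<beta> * q ^ n"
    proof -
      have "(\<beta> * q ^ n) * q ^ degree \<phi>' = \<beta>' * q ^ degree \<phi>'" using h1 dn by (simp add: power_add mult_ac)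
      then show ?thesis using q0 by simp
    qed
    have "add_mset a (image_mset ((*) s) A + B) = add_mset (a * s ^ n) (image_mset ((*) s) B + A)"
      using h2 unfolding Nm1 Nm2[OF bb] Dm1 Dm2 by simp
    then have AB: "A = B + Rm a s n" by (rule mset_conclusion[OF s0 snr sA])
    have "\<phi> = smult \<beta> (LP A)" unfolding \<beta>_def A_def by (rule decomp)
    also have "\<dots> = smult \<beta> (LP B * LP (Rm a s n))" by (simp add: AB LP_plus)
    also have "\<dots> = smult (q powi (- int n) * \<beta>') (LP B * LP (Rm a s n))"
      using cq bb by (simp add: mult_ac)
    also have "\<dots> = smult (q powi (- int n)) (\<phi>' * LP (Rm a s n))"
    proof -
      have "smult (q powi (- int n) * \<beta>') (LP B * LP (Rm a s n)) = smult (q powi (- int n)) (smult \<beta>' (LP B) * LP (Rm a s n))"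
        by (simp add: mult_smult_left)
      also have "smult \<beta>' (LP B) = \<phi>'" unfolding \<beta>'_def B_def by (rule decomp[symmetric])
      finally show ?thesis .
    qed
    finally show "\<phi> = smult (q powi (- int n)) (\<phi>' * LP (Rm a s n))" .
  next
    assume h: "\<phi> = smult (q powi (- int n)) (\<phi>' * LP (Rm a s n))"
    have c0: "q powi (- int n) \<noteq> 0" using q0 by simp
    have lb: "\<beta> = q powi (- int n) * \<beta>'"
      using arg_cong[OF h, of lead_coeff] by (simp add: \<beta>_def \<beta>'_def lead_coeff_mult LP_lead)
    have bb: "\<beta>' = \<beta> * q ^ n" using lb cq by (simp add: mult_ac)
    have AB: "A = B + Rm a s n"
      using arg_cong[OF h, of proots] c0 f0' LP_nz by (simp add: A_def B_def proots_mult LP_proots)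
    have h1: "\<beta> * q ^ degree \<phi> = \<beta>' * q ^ degree \<phi>'"
      using bb dn by (simp add: power_add mult_ac)
    have "Nm q Q \<phi> + Dm Q \<phi>' = Nm q Q \<phi>' + Dm Q \<phi>"
    proof -
      have "Nm q Q \<phi> + Dm Q \<phi>' = add_mset (inverse Q) (image_mset ((*) s) B + B + add_mset a (image_mset ((*) s) (Rm a s n)))"
        unfolding Nm1 Dm2 AB by (simp add: ac_simps)
      also have "\<dots> = Nm q Q \<phi>' + Dm Q \<phi>"
        unfolding Nm2[OF bb] Dm1 AB Rm_shift by (simp add: ac_simps)
      finally show ?thesis .
    qed
    then show "uQ q Q \<phi> = uQ q Q \<phi>'" using iff h1 by blast
  qed
qed



lemma inj_part:
  fixes q Q :: complex
  assumes q0: "q \<noteq> 0" and nr: "\<forall>n::nat. 0 < n \<longrightarrow> q ^ n \<noteq> 1" and Q0: "Q \<noteq> 0"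
    and f: "\<phi> \<in> polysQ Q" and f': "\<phi>' \<in> polysQ Q" and dle: "degree \<phi>' \<le> degree \<phi>"
    and eq: "uQ q Q \<phi> = uQ q Q \<phi>'"
  shows "\<phi> = \<phi>'"
proof -
  have f0: "\<phi> \<noteq> 0" and f0': "\<phi>' \<noteq> 0" using f f' by (auto simp: polysQ_def)
  define n where "n = degree \<phi> - degree \<phi>'"
  define a where "a = lead_coeff \<phi> powi (-2) * inverse Q"
  let ?F = "\<lambda>z::nat. [: - (q powi (- 2 * (int z - 1)) * (lead_coeff \<phi>) powi (-2) * inverse Q), 1 :]"
  have h: "\<phi> = smult (q powi (- int n)) (\<phi>' * (\<Prod>z=1..n. ?F z))"
    using part_i[OF q0 nr Q0 f0 f0' dle] eq by (simp add: n_def)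
  have "n = 0"
  proof (rule ccontr)
    assume "n \<noteq> 0"
    then have "1 \<in> {1..n}" by simp
    moreover have "poly (?F 1) a = 0" by (simp add: a_def)
    ultimately have "(\<Prod>z=1..n. poly (?F z) a) = 0"
      apply (intro prod_zero)
       apply simp
      apply blast
      done
    then have "poly (\<Prod>z=1..n. ?F z) a = 0" by (simp only: poly_prod)
    then have "poly \<phi> a = 0" by (subst h) simp
    then show False using f by (simp add: polysQ_def a_def)
  qed
  then show ?thesis using h by simp
qed

lemma exist_part:
  fixes q Q :: complex
  assumes q0: "q \<noteq> 0" and nr: "\<forall>n::nat. 0 < n \<longrightarrow> q ^ n \<noteq> 1" and Q0: "Q \<noteq> 0"
  shows "\<phi> \<noteq> 0 \<Longrightarrow> \<exists>\<phi>'. \<phi>' \<in> polysQ Q \<and> uQ q Q \<phi> = uQ q Q \<phi>'"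
proof (induction "degree \<phi>" arbitrary: \<phi> rule: less_induct)
  case less
  show ?case
  proof (cases "\<phi> \<in> polysQ Q")
    case True then show ?thesis by blast
  next
    case False
    define a where "a = lead_coeff \<phi> powi (-2) * inverse Q"
    have "poly \<phi> a = 0" using False less.prems by (simp add: polysQ_def a_def)
    then have "[:-a, 1:] dvd \<phi>" by (simp add: poly_eq_0_iff_dvd)
    then obtain \<psi>0 where p: "\<phi> = [:-a, 1:] * \<psi>0" by (elim dvdE)
    have p0: "\<psi>0 \<noteq> 0" using p less.prems by auto
    have "degree ([:-a, 1:] * \<psi>0) = degree [:-a, 1:] + degree \<psi>0" by (rule degree_mult_eq[OF lin1_nz p0])
    then have dp: "degree \<phi> = Suc (degree \<psi>0)" using p by simp
    define \<psi> where "\<psi> = smult q \<psi>0"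
    have ps0: "\<psi> \<noteq> 0" using p0 q0 by (simp add: \<psi>_def)
    have dps: "degree \<psi> = degree \<psi>0" using q0 by (simp add: \<psi>_def)
    have "uQ q Q \<phi> = uQ q Q \<psi>"
    proof -
      have dd: "degree \<phi> - degree \<psi> = 1" using dp dps by simp
      have "\<phi> = smult (q powi (- int (degree \<phi> - degree \<psi>)))
                   (\<psi> * (\<Prod>z=1..degree \<phi> - degree \<psi>.
                      [: - (q powi (- 2 * (int z - 1)) * (lead_coeff \<phi>) powi (-2) * inverse Q), 1 :]))"
      proof -
        have pr: "(\<Prod>z=1..1. [: - (q powi (- 2 * (int z - 1)) * (lead_coeff \<phi>) powi (-2) * inverse Q), 1 :]) = [:-a, 1:]"
          by (simp add: a_def)
        have c1: "q powi (- int 1) * q = 1" using q0 by simp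
        have "smult (q powi (- int 1)) (smult q \<psi>0 * [:-a, 1:]) = \<psi>0 * [:-a, 1:]"
          by (simp only: mult_smult_left smult_smult c1 smult_1_left)
        also have "\<dots> = \<phi>" using p by (simp only: mult.commute)
        finally show ?thesis unfolding dd pr unfolding \<psi>_def by (rule sym)
      qed
      then show ?thesis using part_i[OF q0 nr Q0 less.prems ps0] dp dps by simp
    qed
    moreover obtain \<phi>' where "\<phi>' \<in> polysQ Q \<and> uQ q Q \<psi> = uQ q Q \<phi>'"
      using less.hyps[of \<psi>] ps0 dp dps by auto
    ultimately show ?thesis by auto
  qed
qed

theorem mainTheorem2:
  fixes q Q :: complex
  assumes "q \<noteq> 0" and "\<forall>n::nat. 0 < n \<longrightarrow> q ^ n \<noteq> 1" and "Q \<noteq> 0"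
  shows "(\<forall>\<phi> \<phi>' :: complex poly. \<phi> \<noteq> 0 \<longrightarrow> \<phi>' \<noteq> 0 \<longrightarrow> degree \<phi>' \<le> degree \<phi> \<longrightarrow>
           (uQ q Q \<phi> = uQ q Q \<phi>' \<longleftrightarrow>
            \<phi> = smult (q powi (- int (degree \<phi> - degree \<phi>')))
                   (\<phi>' * (\<Prod>z=1..degree \<phi> - degree \<phi>'.
                      [: - (q powi (- 2 * (int z - 1)) * (lead_coeff \<phi>) powi (-2) * inverse Q), 1 :]))))
       \<and> inj_on (uQ q Q) (polysQ Q)
       \<and> (\<forall>\<phi> :: complex poly. \<phi> \<noteq> 0 \<longrightarrow> (\<exists>!\<phi>'. \<phi>' \<in> polysQ Q \<and> uQ q Q \<phi> = uQ q Q \<phi>'))"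
proof (intro conjI allI impI)
  fix \<phi> \<phi>' :: "complex poly"
  assume "\<phi> \<noteq> 0" "\<phi>' \<noteq> 0" "degree \<phi>' \<le> degree \<phi>"
  then show "(uQ q Q \<phi> = uQ q Q \<phi>' \<longleftrightarrow>
            \<phi> = smult (q powi (- int (degree \<phi> - degree \<phi>')))
                   (\<phi>' * (\<Prod>z=1..degree \<phi> - degree \<phi>'.
                      [: - (q powi (- 2 * (int z - 1)) * (lead_coeff \<phi>) powi (-2) * inverse Q), 1 :])))"
    by (rule part_i[OF assms])
next
  show inj: "inj_on (uQ q Q) (polysQ Q)"
  proof (rule inj_onI)
    fix \<phi> \<phi>' assume f: "\<phi> \<in> polysQ Q" and f': "\<phi>' \<in> polysQ Q" and eq: "uQ q Q \<phi> = uQ q Q \<phi>'"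
    show "\<phi> = \<phi>'"
    proof (cases "degree \<phi>' \<le> degree \<phi>")
      case True then show ?thesis by (rule inj_part[OF assms f f' _ eq])
    next
      case False
      then have "degree \<phi> \<le> degree \<phi>'" by simp
      then show ?thesis using inj_part[OF assms f' f _ eq[symmetric]] by simp
    qed
  qed
  fix \<phi> :: "complex poly" assume "\<phi> \<noteq> 0"
  then obtain \<phi>' where e: "\<phi>' \<in> polysQ Q \<and> uQ q Q \<phi> = uQ q Q \<phi>'" using exist_part[OF assms] by blast
  show "\<exists>!\<phi>'. \<phi>' \<in> polysQ Q \<and> uQ q Q \<phi> = uQ q Q \<phi>'"
  proof (rule ex1I[of _ \<phi>'])
    show "\<phi>' \<in> polysQ Q \<and> uQ q Q \<phi> = uQ q Q \<phi>'" by (rule e)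
    fix \<chi> assume "\<chi> \<in> polysQ Q \<and> uQ q Q \<phi> = uQ q Q \<chi>"
    then show "\<chi> = \<phi>'" using e inj by (auto dest: inj_onD)
  qed
qed


end
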